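(* Let $M$ be an algebraic number field of degree $m$ with ring of integers $\mathbb{Z}_M$ and integral basis $(1,\omega_2,\ldots,\omega_m)$. Let $\alpha$ be an algebraic integer over $M$ of degree $n$ over $M$, let $K=M(\alpha)$, and let $0\neq\mu\in\mathbb{Z}_M$. Let $S$ be the $m\times m$ matrix whose $j$-th row is $(1,\omega_2^{(j)},\ldots,\omega_m^{(j)})$, let $c_2$ be the row norm of $S^{-1}$ (the maximum over the rows of $S^{-1}$ of the sum of the absolute values of the entries of that row), and set \[ c_3=\frac{\sqrt[n]{\overline{|\mu|}}}{\overline{|\alpha|}},\qquad c_5=2c_2\,\overline{|\alpha|}. \] Suppose $X,Y\in\mathbb{Z}_M$ satisfy \[ N_{K/M}(X-\alpha Y)=\mu \] and $\overline{|Y|}>c_3$. Write $X=x_1+\omega_2x_2+\cdots+\omega_mx_m$ and $Y=y_1+\omega_2y_2+\cdots+\omega_my_m$ with $x_i,y_i\in\mathbb{Z}$, and put $A=\max(\max_i|x_i|,\max_i|y_i|)$. Then \[ A\le c_5\cdot\overline{|Y|}. \]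
   Context: Let $\sigma_1,\ldots,\sigma_m$ be the embeddings of $M$ into $\mathbb{C}$; for $\gamma\in M$ write $\gamma^{(j)}=\sigma_j(\gamma)$. Let $f(x)\in\mathbb{Z}_M[x]$ be the monic relative defining polynomial of $\alpha$ over $M$, and for $j=1,\ldots,m$ let $\alpha^{(j1)},\ldots,\alpha^{(jn)}$ be the roots of the polynomial obtained by applying $\sigma_j$ to the coefficients of $f$ (the relative conjugates of $\alpha$ over $M^{(j)}$). For an algebraic number $\gamma$, its size $\overline{|\gamma|}$ is the maximum of the absolute values of its conjugates; in particular $\overline{|\alpha|}=\max_{j,k}|\alpha^{(jk)}|$, $\overline{|Y|}=\max_j|Y^{(j)}|$, $\overline{|\mu|}=\max_j|\mu^{(j)}|$. *)

theory Defs
  imports "HOL-Computational_Algebra.Polynomial" Complex_Main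
begin

text \<open>All fields are modelled as subfields of the complex numbers.\<close>

definition subfield_C :: "complex set \<Rightarrow> bool" where
  "subfield_C M \<longleftrightarrow> 0 \<in> M \<and> 1 \<in> M \<and>
     (\<forall>x\<in>M. \<forall>y\<in>M. x + y \<in> M \<and> x - y \<in> M \<and> x * y \<in> M) \<and>
     (\<forall>x\<in>M. x \<noteq> 0 \<longrightarrow> inverse x \<in> M)"

definition number_field :: "complex set \<Rightarrow> nat \<Rightarrow> bool" where
  "number_field M m \<longleftrightarrow> subfield_C M \<and>
     (\<exists>b :: nat \<Rightarrow> complex. (\<forall>i\<in>{1..m}. b i \<in> M) \<and>
        (\<forall>q :: nat \<Rightarrow> rat. (\<Sum>i=1..m. of_rat (q i) * b i) = 0 \<longrightarrow> (\<forall>i\<in>{1..m}. q i = 0)) \<and>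
        (\<forall>x\<in>M. \<exists>q :: nat \<Rightarrow> rat. x = (\<Sum>i=1..m. of_rat (q i) * b i)))"

definition alg_int :: "complex \<Rightarrow> bool" where
  "alg_int x \<longleftrightarrow> (\<exists>p :: complex poly. lead_coeff p = 1 \<and> (\<forall>i. coeff p i \<in> \<int>) \<and> poly p x = 0)"

definition ring_of_integers :: "complex set \<Rightarrow> complex set" where
  "ring_of_integers M = {x \<in> M. alg_int x}"

definition integral_basis :: "complex set \<Rightarrow> nat \<Rightarrow> (nat \<Rightarrow> complex) \<Rightarrow> bool" where
  "integral_basis M m w \<longleftrightarrow> w 1 = 1 \<and> (\<forall>i\<in>{1..m}. w i \<in> ring_of_integers M) \<and>
     (\<forall>q :: nat \<Rightarrow> int. (\<Sum>i=1..m. of_int (q i) * w i) = 0 \<longrightarrow> (\<forall>i\<in>{1..m}. q i = 0)) \<and>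
     (\<forall>x\<in>ring_of_integers M. \<exists>q :: nat \<Rightarrow> int. x = (\<Sum>i=1..m. of_int (q i) * w i))"

definition field_embedding :: "complex set \<Rightarrow> (complex \<Rightarrow> complex) \<Rightarrow> bool" where
  "field_embedding M \<sigma> \<longleftrightarrow> \<sigma> 1 = 1 \<and>
     (\<forall>x\<in>M. \<forall>y\<in>M. \<sigma> (x + y) = \<sigma> x + \<sigma> y \<and> \<sigma> (x * y) = \<sigma> x * \<sigma> y)"

definition all_embeddings :: "complex set \<Rightarrow> nat \<Rightarrow> (nat \<Rightarrow> complex \<Rightarrow> complex) \<Rightarrow> bool" where
  "all_embeddings M m \<sigma> \<longleftrightarrow>
     (\<forall>j\<in>{1..m}. field_embedding M (\<sigma> j)) \<and>
     (\<forall>j\<in>{1..m}. \<forall>k\<in>{1..m}. j \<noteq> k \<longrightarrow> (\<exists>x\<in>M. \<sigma> j x \<noteq> \<sigma> k x)) \<and>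
     (\<forall>\<tau>. field_embedding M \<tau> \<longrightarrow> (\<exists>j\<in>{1..m}. \<forall>x\<in>M. \<tau> x = \<sigma> j x))"

definition irreducible_over :: "complex set \<Rightarrow> complex poly \<Rightarrow> bool" where
  "irreducible_over M f \<longleftrightarrow> degree f \<ge> 1 \<and> (\<forall>i. coeff f i \<in> M) \<and>
     (\<forall>g h. (\<forall>i. coeff g i \<in> M) \<longrightarrow> (\<forall>i. coeff h i \<in> M) \<longrightarrow> f = g * h \<longrightarrow>
        degree g = 0 \<or> degree h = 0)"

text \<open>Relative norm N_{K/M}(X - alpha Y), K = M(alpha), where f is the minimal polynomial
  of alpha over M: the product over the embeddings of K over M, i.e. over the (distinct)
  roots r of f, of X - r Y.\<close>
definition rel_norm_lin :: "complex poly \<Rightarrow> complex \<Rightarrow> complex \<Rightarrow> complex" where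
  "rel_norm_lin f X Y = (\<Prod>r\<in>{r. poly f r = 0}. X - r * Y)"

definition size_M :: "nat \<Rightarrow> (nat \<Rightarrow> complex \<Rightarrow> complex) \<Rightarrow> complex \<Rightarrow> real" where
  "size_M m \<sigma> x = Max ((\<lambda>j. cmod (\<sigma> j x)) ` {1..m})"

text \<open>Size of alpha: max absolute value of all relative conjugates alpha^(jk), i.e. the roots
  of sigma_j(f) for j = 1..m.\<close>
definition size_alpha :: "nat \<Rightarrow> (nat \<Rightarrow> complex \<Rightarrow> complex) \<Rightarrow> complex poly \<Rightarrow> real" where
  "size_alpha m \<sigma> f = Max {cmod r | r j. j \<in> {1..m} \<and> poly (map_poly (\<sigma> j) f) r = 0}"

definition mat_inv_1 :: "nat \<Rightarrow> (nat \<Rightarrow> nat \<Rightarrow> complex) \<Rightarrow> (nat \<Rightarrow> nat \<Rightarrow> complex)" where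
  "mat_inv_1 m S = (THE T. (\<forall>i\<in>{1..m}. \<forall>k\<in>{1..m}.
        (\<Sum>j=1..m. T i j * S j k) = (if i = k then 1 else 0)) \<and>
      (\<forall>i j. i \<notin> {1..m} \<or> j \<notin> {1..m} \<longrightarrow> T i j = 0))"

definition row_norm :: "nat \<Rightarrow> (nat \<Rightarrow> nat \<Rightarrow> complex) \<Rightarrow> real" where
  "row_norm m T = Max ((\<lambda>i. \<Sum>j=1..m. cmod (T i j)) ` {1..m})"

end

theory Submission
  imports Defs "Jordan_Normal_Form.Determinant" "HOL-Computational_Algebra.Fundamental_Theorem_Algebra"
begin


lemma sum_shift1: "(\<Sum>j=1..m. g j) = (\<Sum>j<m. g (Suc j))"
  by (induction m) auto

lemma left_inv_exists:
  fixes S :: "nat \<Rightarrow> nat \<Rightarrow> 'a::field"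
  assumes ker: "\<forall>c. (\<forall>k\<in>{1..m}. (\<Sum>j=1..m. c j * S j k) = 0) \<longrightarrow> (\<forall>j\<in>{1..m}. c j = 0)"
  shows "\<exists>T. (\<forall>i\<in>{1..m}. \<forall>k\<in>{1..m}. (\<Sum>j=1..m. T i j * S j k) = (if i=k then 1 else 0)) \<and>
             (\<forall>i\<in>{1..m}. \<forall>k\<in>{1..m}. (\<Sum>j=1..m. S i j * T j k) = (if i=k then 1 else 0))"
proof -
  define A where "A = mat m m (\<lambda>(i,j). S (Suc i) (Suc j))"
  have Ac: "A \<in> carrier_mat m m" unfolding A_def by auto
  have "det (transpose_mat A) \<noteq> 0"
  proof
    assume "det (transpose_mat A) = 0"
    then obtain v where v: "v \<in> carrier_vec m" "v \<noteq> 0\<^sub>v m" "transpose_mat A *\<^sub>v v = 0\<^sub>v m"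
      using det_0_iff_vec_prod_zero_field[of "transpose_mat A" m] Ac by auto
    define c where "c j = v $ (j - 1)" for j
    have "\<forall>k\<in>{1..m}. (\<Sum>j=1..m. c j * S j k) = 0"
    proof
      fix k assume k: "k \<in> {1..m}"
      have "(transpose_mat A *\<^sub>v v) $ (k - 1) = 0" using v k by auto
      moreover have "(transpose_mat A *\<^sub>v v) $ (k - 1) = (\<Sum>j<m. A $$ (j, k-1) * v $ j)"
        using v k Ac by (subst index_mult_mat_vec) (auto simp: scalar_prod_def atLeast0LessThan)
      ultimately have "(\<Sum>j<m. A $$ (j, k-1) * v $ j) = 0" by simp
      moreover have "(\<Sum>j<m. A $$ (j, k-1) * v $ j) = (\<Sum>j<m. S (Suc j) k * v $ j)"
        using k unfolding A_def by (intro sum.cong) auto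
      ultimately have "(\<Sum>j<m. S (Suc j) k * v $ j) = 0" by simp
      thus "(\<Sum>j=1..m. c j * S j k) = 0" unfolding sum_shift1 c_def by (simp add: mult.commute)
    qed
    hence "\<forall>j\<in>{1..m}. c j = 0" using ker by blast
    hence "v = 0\<^sub>v m" using v(1) unfolding c_def
      by (intro eq_vecI) (auto dest!: bspec[of _ _ "Suc _"])
    with v(2) show False by simp
  qed
  hence "det A \<noteq> 0" using det_transpose[OF Ac] by simp
  from det_non_zero_imp_unit[OF Ac this, of "()"]
  obtain B where B: "B \<in> carrier_mat m m" "B * A = 1\<^sub>m m" "A * B = 1\<^sub>m m"
    unfolding Units_def ring_mat_def by auto
  define T where "T i j = B $$ (i - 1, j - 1)" for i j
  show ?thesis
  proof (intro exI[of _ T] conjI ballI)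
    fix i k assume i: "i \<in> {1..m}" and k: "k \<in> {1..m}"
    have "(B * A) $$ (i-1, k-1) = (if i = k then 1 else 0)" using B i k by auto
    moreover have "(B * A) $$ (i-1, k-1) = (\<Sum>j<m. B $$ (i-1, j) * A $$ (j, k-1))"
      using B Ac i k by (subst index_mult_mat) (auto simp: scalar_prod_def atLeast0LessThan)
    ultimately have "(\<Sum>j<m. B $$ (i-1, j) * A $$ (j, k-1)) = (if i = k then 1 else 0)" by simp
    moreover have "(\<Sum>j<m. B $$ (i-1, j) * A $$ (j, k-1)) = (\<Sum>j=1..m. T i j * S j k)"
      unfolding sum_shift1 T_def A_def using k by (intro sum.cong) auto
    ultimately show "(\<Sum>j=1..m. T i j * S j k) = (if i=k then 1 else 0)" by simp
    have "(A * B) $$ (i-1, k-1) = (if i = k then 1 else 0)" using B i k by auto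
    moreover have "(A * B) $$ (i-1, k-1) = (\<Sum>j<m. A $$ (i-1, j) * B $$ (j, k-1))"
      using B Ac i k by (subst index_mult_mat) (auto simp: scalar_prod_def atLeast0LessThan)
    ultimately have "(\<Sum>j<m. A $$ (i-1, j) * B $$ (j, k-1)) = (if i = k then 1 else 0)" by simp
    moreover have "(\<Sum>j<m. A $$ (i-1, j) * B $$ (j, k-1)) = (\<Sum>j=1..m. S i j * T j k)"
      unfolding sum_shift1 T_def A_def using i by (intro sum.cong) auto
    ultimately show "(\<Sum>j=1..m. S i j * T j k) = (if i=k then 1 else 0)" by simp
  qed
qed


context
  fixes M :: "complex set"
  assumes sf: "subfield_C M"
begin

lemma sf_0: "0 \<in> M" and sf_1: "1 \<in> M"
  using sf unfolding subfield_C_def by auto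
lemma sf_add: "x \<in> M \<Longrightarrow> y \<in> M \<Longrightarrow> x + y \<in> M"
  and sf_diff: "x \<in> M \<Longrightarrow> y \<in> M \<Longrightarrow> x - y \<in> M"
  and sf_mult: "x \<in> M \<Longrightarrow> y \<in> M \<Longrightarrow> x * y \<in> M"
  using sf unfolding subfield_C_def by auto
lemma sf_inv: "x \<in> M \<Longrightarrow> inverse x \<in> M"
  using sf unfolding subfield_C_def by (cases "x = 0") auto
lemma sf_uminus: "x \<in> M \<Longrightarrow> -x \<in> M"
  using sf_diff[OF sf_0] by simp
lemma sf_divide: "x \<in> M \<Longrightarrow> y \<in> M \<Longrightarrow> x / y \<in> M"
  using sf_mult sf_inv by (simp add: divide_inverse)
lemma sf_power: "x \<in> M \<Longrightarrow> x ^ k \<in> M"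
  by (induction k) (auto intro: sf_1 sf_mult)
lemma sf_of_nat: "of_nat k \<in> M"
  by (induction k) (auto intro: sf_0 sf_1 sf_add)
lemma sf_of_int: "of_int k \<in> M"
proof (cases "k \<ge> 0")
  case True
  hence "(of_int k :: complex) = of_nat (nat k)" by simp
  thus ?thesis using sf_of_nat by simp
next
  case False
  hence "(of_int k :: complex) = - of_nat (nat (-k))" by simp
  thus ?thesis using sf_of_nat sf_uminus by simp
qed
lemma sf_of_rat: "of_rat r \<in> M"
proof -
  obtain a b where "r = Rat.Fract a b" "b > 0" by (cases r) auto
  hence "of_rat r = (of_int a / of_int b :: complex)" by (simp add: of_rat_rat)
  thus ?thesis using sf_divide sf_of_int by simp
qed
lemma sf_sum: "(\<And>i. i \<in> A \<Longrightarrow> g i \<in> M) \<Longrightarrow> sum g A \<in> M"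
  by (induction A rule: infinite_finite_induct) (auto intro: sf_0 sf_add)

end

context
  fixes M :: "complex set" and \<sigma> :: "complex \<Rightarrow> complex"
  assumes sf: "subfield_C M" and fe: "field_embedding M \<sigma>"
begin

lemmas s_0 = sf_0[OF sf] and s_1 = sf_1[OF sf] and s_add = sf_add[OF sf] and s_diff = sf_diff[OF sf]
  and s_mult = sf_mult[OF sf] and s_inv = sf_inv[OF sf] and s_uminus = sf_uminus[OF sf]
  and s_divide = sf_divide[OF sf] and s_power = sf_power[OF sf] and s_of_nat = sf_of_nat[OF sf]
  and s_of_int = sf_of_int[OF sf] and s_of_rat = sf_of_rat[OF sf] and s_sum = sf_sum[OF sf]

lemma fe_1: "\<sigma> 1 = 1" using fe unfolding field_embedding_def by auto
lemma fe_add: "x \<in> M \<Longrightarrow> y \<in> M \<Longrightarrow> \<sigma> (x + y) = \<sigma> x + \<sigma> y"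
  and fe_mult: "x \<in> M \<Longrightarrow> y \<in> M \<Longrightarrow> \<sigma> (x * y) = \<sigma> x * \<sigma> y"
  using fe unfolding field_embedding_def by auto
lemma fe_0: "\<sigma> 0 = 0"
  using fe_add[OF s_0 s_0] by simp
lemma fe_uminus: "x \<in> M \<Longrightarrow> \<sigma> (-x) = - \<sigma> x"
  using fe_add[of x "-x"] s_uminus fe_0 by (simp add: eq_neg_iff_add_eq_0 add.commute)
lemma fe_diff: "x \<in> M \<Longrightarrow> y \<in> M \<Longrightarrow> \<sigma> (x - y) = \<sigma> x - \<sigma> y"
  using fe_add[of x "-y"] fe_uminus[of y] s_uminus by simp
lemma fe_power: "x \<in> M \<Longrightarrow> \<sigma> (x ^ k) = \<sigma> x ^ k"
  by (induction k) (auto simp: fe_1 fe_mult s_power)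
lemma fe_sum: "(\<And>i. i \<in> A \<Longrightarrow> g i \<in> M) \<Longrightarrow> \<sigma> (sum g A) = (\<Sum>i\<in>A. \<sigma> (g i))"
proof (induction A rule: infinite_finite_induct)
  case (insert x F)
  have "g x \<in> M" "sum g F \<in> M" using insert.prems by (auto intro!: s_sum)
  thus ?case using insert by (simp add: fe_add)
qed (auto simp: fe_0)
lemma fe_of_nat: "\<sigma> (of_nat k) = of_nat k"
  by (induction k) (auto simp: fe_0 fe_1 fe_add s_of_nat s_1)
lemma fe_of_int: "\<sigma> (of_int k) = of_int k"
proof (cases "k \<ge> 0")
  case True
  hence "(of_int k :: complex) = of_nat (nat k)" by simp
  thus ?thesis using fe_of_nat by simp
next
  case False
  hence "(of_int k :: complex) = - of_nat (nat (-k))" by simp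
  thus ?thesis using fe_of_nat fe_uminus s_of_nat by simp
qed
lemma fe_of_rat: "\<sigma> (of_rat r) = of_rat r"
proof -
  obtain a b where r: "r = Rat.Fract a b" and b: "b > 0" by (cases r) auto
  hence e: "of_rat r = (of_int a / of_int b :: complex)" by (simp add: of_rat_rat)
  have "\<sigma> (of_int b * of_rat r) = of_int a" using e b by (simp add: fe_of_int)
  hence "of_int b * \<sigma> (of_rat r) = of_int a"
    using fe_mult[OF s_of_int s_of_rat] fe_of_int by simp
  hence "\<sigma> (of_rat r) = of_int a / of_int b" using b by (subst eq_divide_eq) (auto simp: mult.commute)
  thus ?thesis using e by simp
qed
lemma fe_nz: "x \<in> M \<Longrightarrow> x \<noteq> 0 \<Longrightarrow> \<sigma> x \<noteq> 0"
  using fe_mult[of x "inverse x"] s_inv fe_1 by force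

end


lemma common_denom:
  fixes c :: "'b \<Rightarrow> rat"
  assumes "finite A"
  shows "\<exists>D::int. D > 0 \<and> (\<forall>i\<in>A. \<exists>z::int. of_int D * c i = of_int z)"
  using assms
proof (induction A rule: finite_induct)
  case empty
  then show ?case by (intro exI[of _ 1]) auto
next
  case (insert x F)
  then obtain D where D: "D > 0" "\<forall>i\<in>F. \<exists>z::int. of_int D * c i = of_int z" by auto
  obtain a b where ab: "c x = Rat.Fract a b" "b > 0" by (cases "c x") auto
  show ?case
  proof (rule exI[of _ "D * b"], intro conjI ballI)
    show "D * b > 0" using D ab by simp
    fix i assume "i \<in> insert x F"
    then consider "i = x" | "i \<in> F" by auto
    then show "\<exists>z::int. of_int (D * b) * c i = of_int z"
    proof cases
      case 1
      have "of_int (D * b) * c i = of_int (D * a)" using ab 1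
        by (simp add: Fract_of_int_quotient field_simps)
      then show ?thesis by blast
    next
      case 2
      then obtain z where "of_int D * c i = of_int z" using D by auto
      hence "of_int (D * b) * c i = of_int (z * b)" by (simp add: field_simps)
      then show ?thesis by blast
    qed
  qed
qed

lemma omega_Q_indep:
  assumes ib: "integral_basis M m \<omega>"
    and h: "(\<Sum>i=1..m. of_rat (c i) * \<omega> i) = 0"
  shows "\<forall>i\<in>{1..m}. c i = 0"
proof -
  obtain D :: int where D: "D > 0" "\<forall>i\<in>{1..m}. \<exists>z::int. of_int D * c i = of_int z"
    using common_denom[of "{1..m}" c] by auto
  define q where "q i = (SOME z::int. of_int D * c i = of_int z)" for i
  have q: "of_int D * c i = of_int (q i)" if "i \<in> {1..m}" for i
    using D(2) that unfolding q_def by (metis (mono_tags) someI_ex)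
  have "(\<Sum>i=1..m. of_int (q i) * \<omega> i) = (\<Sum>i=1..m. of_int D * (of_rat (c i) * \<omega> i))"
  proof (intro sum.cong refl)
    fix i assume i: "i \<in> {1..m}"
    have "(of_int (q i) :: complex) = of_rat (of_int (q i))" by simp
    also have "\<dots> = of_rat (of_int D * c i)" using q[OF i] by simp
    also have "\<dots> = of_int D * of_rat (c i)" by (simp add: of_rat_mult)
    finally show "of_int (q i) * \<omega> i = of_int D * (of_rat (c i) * \<omega> i)" by simp
  qed
  also have "\<dots> = 0" using h by (simp add: sum_distrib_left[symmetric])
  finally have "\<forall>i\<in>{1..m}. q i = 0" using ib unfolding integral_basis_def by blast
  thus ?thesis using q D(1) by (metis mult_eq_0_iff of_int_0 of_int_0_eq_iff order_less_irrefl)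
qed

lemma omega_Q_span:
  assumes nf: "number_field M m" and ib: "integral_basis M m \<omega>"
  shows "\<forall>x\<in>M. \<exists>r::nat\<Rightarrow>rat. x = (\<Sum>i=1..m. of_rat (r i) * \<omega> i)"
proof -
  obtain b :: "nat \<Rightarrow> complex" where b: "\<forall>i\<in>{1..m}. b i \<in> M"
     "\<forall>x\<in>M. \<exists>q :: nat \<Rightarrow> rat. x = (\<Sum>i=1..m. of_rat (q i) * b i)"
    using nf unfolding number_field_def by blast
  have om: "\<forall>i\<in>{1..m}. \<omega> i \<in> M" using ib unfolding integral_basis_def ring_of_integers_def by auto
  have "\<forall>i\<in>{1..m}. \<exists>q :: nat \<Rightarrow> rat. \<omega> i = (\<Sum>k=1..m. of_rat (q k) * b k)"
    using om b(2) by blast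
  then obtain B where B: "\<forall>i\<in>{1..m}. \<omega> i = (\<Sum>k=1..m. of_rat (B i k) * b k)"
    by metis
  have ker: "\<forall>c. (\<forall>k\<in>{1..m}. (\<Sum>j=1..m. c j * B j k) = 0) \<longrightarrow> (\<forall>j\<in>{1..m}. c j = 0)"
  proof (intro allI impI)
    fix c :: "nat \<Rightarrow> rat" assume c: "\<forall>k\<in>{1..m}. (\<Sum>j=1..m. c j * B j k) = 0"
    have "(\<Sum>j=1..m. of_rat (c j) * \<omega> j) = (\<Sum>j=1..m. of_rat (c j) * (\<Sum>k=1..m. of_rat (B j k) * b k))"
      using B by (intro sum.cong) auto
    also have "\<dots> = (\<Sum>k=1..m. of_rat (\<Sum>j=1..m. c j * B j k) * b k)"
      by (simp add: sum_distrib_left sum_distrib_right of_rat_sum of_rat_mult mult.assoc) (rule sum.swap)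
    also have "\<dots> = 0" using c by simp
    finally show "\<forall>j\<in>{1..m}. c j = 0" using omega_Q_indep[OF ib] by blast
  qed
  from left_inv_exists[OF ker] obtain C where
    C: "\<forall>i\<in>{1..m}. \<forall>k\<in>{1..m}. (\<Sum>j=1..m. C i j * B j k) = (if i=k then 1 else 0)" by blast
  have bC: "b k = (\<Sum>i=1..m. of_rat (C k i) * \<omega> i)" if k: "k \<in> {1..m}" for k
  proof -
    have "(\<Sum>i=1..m. of_rat (C k i) * \<omega> i) = (\<Sum>i=1..m. of_rat (C k i) * (\<Sum>l=1..m. of_rat (B i l) * b l))"
      using B by (intro sum.cong) auto
    also have "\<dots> = (\<Sum>l=1..m. of_rat (\<Sum>i=1..m. C k i * B i l) * b l)"
      by (simp add: sum_distrib_left sum_distrib_right of_rat_sum of_rat_mult mult.assoc) (rule sum.swap)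
    also have "\<dots> = (\<Sum>l=1..m. (if k = l then b l else 0))"
      using C k by (intro sum.cong) auto
    also have "\<dots> = b k" using k by simp
    finally show ?thesis by simp
  qed
  show ?thesis
  proof
    fix x assume "x \<in> M"
    then obtain q where q: "x = (\<Sum>k=1..m. of_rat (q k) * b k)" using b by blast
    also have "\<dots> = (\<Sum>k=1..m. of_rat (q k) * (\<Sum>i=1..m. of_rat (C k i) * \<omega> i))"
      using bC by (intro sum.cong) auto
    also have "\<dots> = (\<Sum>i=1..m. of_rat (\<Sum>k=1..m. q k * C k i) * \<omega> i)"
      by (simp add: sum_distrib_left sum_distrib_right of_rat_sum of_rat_mult mult.assoc) (rule sum.swap)
    finally show "\<exists>r::nat\<Rightarrow>rat. x = (\<Sum>i=1..m. of_rat (r i) * \<omega> i)"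
      by (rule exI[of _ "\<lambda>i. \<Sum>k=1..m. q k * C k i"])
  qed
qed



lemma dedekind:
  assumes sf: "subfield_C M" and fe: "\<forall>j\<in>I. field_embedding M (\<sigma> j)"
    and dist: "\<forall>j\<in>I. \<forall>k\<in>I. j \<noteq> k \<longrightarrow> (\<exists>x\<in>M. \<sigma> j x \<noteq> \<sigma> k x)"
    and fin: "finite J" and sub: "J \<subseteq> I"
  shows "\<forall>c. (\<forall>x\<in>M. (\<Sum>j\<in>J. c j * \<sigma> j x) = 0) \<longrightarrow> (\<forall>j\<in>J. c j = 0)"
  using fin sub
proof (induction J rule: finite_induct)
  case empty
  then show ?case by simp
next
  case (insert a J)
  show ?case
  proof (intro allI impI)
    fix c assume c: "\<forall>x\<in>M. (\<Sum>j\<in>insert a J. c j * \<sigma> j x) = 0"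
    have c': "(\<Sum>j\<in>J. c j * \<sigma> j x) = - (c a * \<sigma> a x)" if "x \<in> M" for x
      using c that insert.hyps by (simp add: eq_neg_iff_add_eq_0 add.commute)
    have feA: "field_embedding M (\<sigma> a)" using fe insert.prems by auto
    have cJ: "\<forall>b\<in>J. c b = 0"
    proof
      fix b assume b: "b \<in> J"
      with insert.hyps insert.prems have "a \<noteq> b" "a \<in> I" "b \<in> I" by auto
      then obtain y where y: "y \<in> M" "\<sigma> a y \<noteq> \<sigma> b y" using dist by blast
      define d where "d j = c j * (\<sigma> j y - \<sigma> a y)" for j
      have "\<forall>x\<in>M. (\<Sum>j\<in>J. d j * \<sigma> j x) = 0"
      proof
        fix x assume x: "x \<in> M"
        have yx: "y * x \<in> M" using sf_mult[OF sf y(1) x] .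
        have "(\<Sum>j\<in>J. d j * \<sigma> j x) = (\<Sum>j\<in>J. c j * \<sigma> j (y * x)) - \<sigma> a y * (\<Sum>j\<in>J. c j * \<sigma> j x)"
          unfolding d_def sum_distrib_left sum_subtractf[symmetric]
        proof (intro sum.cong refl)
          fix j assume "j \<in> J"
          hence "field_embedding M (\<sigma> j)" using fe insert.prems by auto
          hence "\<sigma> j (y * x) = \<sigma> j y * \<sigma> j x" using fe_mult[OF sf _ y(1) x] by blast
          thus "c j * (\<sigma> j y - \<sigma> a y) * \<sigma> j x = c j * \<sigma> j (y * x) - \<sigma> a y * (c j * \<sigma> j x)"
            by (simp add: algebra_simps)
        qed
        also have "\<dots> = - (c a * \<sigma> a (y * x)) + \<sigma> a y * (c a * \<sigma> a x)"
          using c'[OF yx] c'[OF x] by simp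
        also have "\<dots> = 0" using fe_mult[OF sf feA y(1) x] by simp
        finally show "(\<Sum>j\<in>J. d j * \<sigma> j x) = 0" .
      qed
      hence "d b = 0" using insert.IH insert.prems b by blast
      thus "c b = 0" using y(2) unfolding d_def by simp
    qed
    have "(\<Sum>j\<in>J. c j * \<sigma> j 1) = 0" using cJ by simp
    hence "c a * \<sigma> a 1 = 0" using c'[OF sf_1[OF sf]] by simp
    hence "c a = 0" using fe_1[OF sf feA] by simp
    thus "\<forall>j\<in>insert a J. c j = 0" using cJ by simp
  qed
qed

lemma mat_inv_1_prop:
  fixes S T :: "nat \<Rightarrow> nat \<Rightarrow> complex"
  assumes L: "\<forall>i\<in>{1..m}. \<forall>k\<in>{1..m}. (\<Sum>j=1..m. T i j * S j k) = (if i=k then 1 else 0)"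
    and R: "\<forall>i\<in>{1..m}. \<forall>k\<in>{1..m}. (\<Sum>j=1..m. S i j * T j k) = (if i=k then 1 else 0)"
  shows "\<forall>i\<in>{1..m}. \<forall>k\<in>{1..m}. (\<Sum>j=1..m. mat_inv_1 m S i j * S j k) = (if i=k then 1 else 0)"
proof -
  define P where "P U \<longleftrightarrow> (\<forall>i\<in>{1..m}. \<forall>k\<in>{1..m}.
        (\<Sum>j=1..m. U i j * S j k) = (if i = k then 1 else 0)) \<and>
      (\<forall>i j. i \<notin> {1..m} \<or> j \<notin> {1..m} \<longrightarrow> U i j = (0::complex))" for U
  define T0 where "T0 i j = (if i \<in> {1..m} \<and> j \<in> {1..m} then T i j else 0)" for i j
  have PT0: "P T0" unfolding P_def
  proof (intro conjI ballI allI impI)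
    fix i k assume i: "i \<in> {1..m}" and k: "k \<in> {1..m}"
    have "(\<Sum>j=1..m. T0 i j * S j k) = (\<Sum>j=1..m. T i j * S j k)"
      using i by (intro sum.cong) (auto simp: T0_def)
    then show "(\<Sum>j=1..m. T0 i j * S j k) = (if i = k then 1 else 0)" using L i k by simp
  next
    fix i j assume "i \<notin> {1..m} \<or> j \<notin> {1..m}"
    then show "T0 i j = 0" unfolding T0_def by auto
  qed
  have uniq: "U = T0" if "P U" for U
  proof (intro ext)
    fix i k
    show "U i k = T0 i k"
    proof (cases "i \<in> {1..m} \<and> k \<in> {1..m}")
      case True
      have "(\<Sum>j=1..m. (\<Sum>l=1..m. U i l * S l j) * T j k) = (\<Sum>j=1..m. (if i = j then T j k else 0))"
        using that True unfolding P_def by (intro sum.cong) auto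
      also have "\<dots> = T i k" using True by simp
      finally have 1: "(\<Sum>j=1..m. (\<Sum>l=1..m. U i l * S l j) * T j k) = T i k" .
      have "(\<Sum>j=1..m. (\<Sum>l=1..m. U i l * S l j) * T j k) = (\<Sum>l=1..m. U i l * (\<Sum>j=1..m. S l j * T j k))"
        by (simp add: sum_distrib_left sum_distrib_right mult.assoc) (rule sum.swap)
      also have "\<dots> = (\<Sum>l=1..m. (if l = k then U i l else 0))"
        using R True by (intro sum.cong) auto
      also have "\<dots> = U i k" using True by simp
      finally show ?thesis using 1 True unfolding T0_def by simp
    next
      case False
      thus ?thesis using that unfolding P_def T0_def by auto
    qed
  qed
  have "P (mat_inv_1 m S)"
    unfolding mat_inv_1_def P_def[symmetric] using PT0 uniq by (rule theI)
  thus ?thesis unfolding P_def by blast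
qed



lemma nf_sf: "number_field M m \<Longrightarrow> subfield_C M"
  unfolding number_field_def by auto

lemma ib_in: "integral_basis M m \<omega> \<Longrightarrow> i \<in> {1..m} \<Longrightarrow> \<omega> i \<in> M"
  unfolding integral_basis_def ring_of_integers_def by auto

lemma emb_fe: "all_embeddings M m \<sigma> \<Longrightarrow> j \<in> {1..m} \<Longrightarrow> field_embedding M (\<sigma> j)"
  unfolding all_embeddings_def by auto

lemma S_inv:
  assumes nf: "number_field M m" and emb: "all_embeddings M m \<sigma>" and ib: "integral_basis M m \<omega>"
  shows "\<forall>i\<in>{1..m}. \<forall>k\<in>{1..m}. (\<Sum>j=1..m. mat_inv_1 m (\<lambda>j i. \<sigma> j (\<omega> i)) i j * \<sigma> j (\<omega> k)) = (if i=k then 1 else 0)"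
proof -
  have sf: "subfield_C M" using nf by (rule nf_sf)
  let ?S = "\<lambda>j i. \<sigma> j (\<omega> i)"
  have ker: "\<forall>c. (\<forall>k\<in>{1..m}. (\<Sum>j=1..m. c j * ?S j k) = 0) \<longrightarrow> (\<forall>j\<in>{1..m}. c j = 0)"
  proof (intro allI impI)
    fix c assume c: "\<forall>k\<in>{1..m}. (\<Sum>j=1..m. c j * ?S j k) = 0"
    have "\<forall>x\<in>M. (\<Sum>j\<in>{1..m}. c j * \<sigma> j x) = 0"
    proof
      fix x assume "x \<in> M"
      then obtain r where r: "x = (\<Sum>i=1..m. of_rat (r i) * \<omega> i)"
        using omega_Q_span[OF nf ib] by blast
      have sx: "\<sigma> j x = (\<Sum>i=1..m. of_rat (r i) * \<sigma> j (\<omega> i))" if j: "j \<in> {1..m}" for j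
      proof -
        have fe: "field_embedding M (\<sigma> j)" using emb j by (rule emb_fe)
        have "\<sigma> j x = (\<Sum>i=1..m. \<sigma> j (of_rat (r i) * \<omega> i))"
          unfolding r using ib_in[OF ib] sf_mult[OF sf sf_of_rat[OF sf]]
          by (intro fe_sum[OF sf fe]) auto
        also have "\<dots> = (\<Sum>i=1..m. of_rat (r i) * \<sigma> j (\<omega> i))"
          using ib_in[OF ib] fe_mult[OF sf fe sf_of_rat[OF sf]] fe_of_rat[OF sf fe]
          by (intro sum.cong) auto
        finally show ?thesis .
      qed
      have "(\<Sum>j\<in>{1..m}. c j * \<sigma> j x) = (\<Sum>j\<in>{1..m}. c j * (\<Sum>i=1..m. of_rat (r i) * \<sigma> j (\<omega> i)))"
        using sx by (intro sum.cong) auto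
      also have "\<dots> = (\<Sum>i=1..m. of_rat (r i) * (\<Sum>j=1..m. c j * \<sigma> j (\<omega> i)))"
        by (simp add: sum_distrib_left sum_distrib_right mult.assoc mult.left_commute) (rule sum.swap)
      also have "\<dots> = 0" using c by simp
      finally show "(\<Sum>j\<in>{1..m}. c j * \<sigma> j x) = 0" .
    qed
    moreover have "\<forall>j\<in>{1..m}. field_embedding M (\<sigma> j)" using emb unfolding all_embeddings_def by auto
    moreover have "\<forall>j\<in>{1..m}. \<forall>k\<in>{1..m}. j \<noteq> k \<longrightarrow> (\<exists>x\<in>M. \<sigma> j x \<noteq> \<sigma> k x)"
      using emb unfolding all_embeddings_def by auto
    ultimately show "\<forall>j\<in>{1..m}. c j = 0" using dedekind[OF sf, of "{1..m}" \<sigma> "{1..m}"] by blast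
  qed
  from left_inv_exists[OF ker] obtain T where
    "\<forall>i\<in>{1..m}. \<forall>k\<in>{1..m}. (\<Sum>j=1..m. T i j * ?S j k) = (if i=k then 1 else 0)"
    "\<forall>i\<in>{1..m}. \<forall>k\<in>{1..m}. (\<Sum>j=1..m. ?S i j * T j k) = (if i=k then 1 else 0)" by blast
  from mat_inv_1_prop[OF this] show ?thesis .
qed

lemma coord:
  assumes nf: "number_field M m" and emb: "all_embeddings M m \<sigma>" and ib: "integral_basis M m \<omega>"
    and z: "z = (\<Sum>i=1..m. of_int (a i) * \<omega> i)" and k: "k \<in> {1..m}"
  shows "of_int (a k) = (\<Sum>j=1..m. mat_inv_1 m (\<lambda>j i. \<sigma> j (\<omega> i)) k j * \<sigma> j z)"
proof -
  have sf: "subfield_C M" using nf by (rule nf_sf)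
  let ?T = "mat_inv_1 m (\<lambda>j i. \<sigma> j (\<omega> i))"
  have sz: "\<sigma> j z = (\<Sum>i=1..m. of_int (a i) * \<sigma> j (\<omega> i))" if j: "j \<in> {1..m}" for j
  proof -
    have fe: "field_embedding M (\<sigma> j)" using emb j by (rule emb_fe)
    have "\<sigma> j z = (\<Sum>i=1..m. \<sigma> j (of_int (a i) * \<omega> i))"
      unfolding z using ib_in[OF ib] sf_mult[OF sf sf_of_int[OF sf]]
      by (intro fe_sum[OF sf fe]) auto
    also have "\<dots> = (\<Sum>i=1..m. of_int (a i) * \<sigma> j (\<omega> i))"
      using ib_in[OF ib] fe_mult[OF sf fe sf_of_int[OF sf]] fe_of_int[OF sf fe]
      by (intro sum.cong) auto
    finally show ?thesis .
  qed
  have "(\<Sum>j=1..m. ?T k j * \<sigma> j z) = (\<Sum>j=1..m. ?T k j * (\<Sum>i=1..m. of_int (a i) * \<sigma> j (\<omega> i)))"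
    using sz by (intro sum.cong) auto
  also have "\<dots> = (\<Sum>i=1..m. of_int (a i) * (\<Sum>j=1..m. ?T k j * \<sigma> j (\<omega> i)))"
    by (simp add: sum_distrib_left sum_distrib_right mult.assoc mult.left_commute) (rule sum.swap)
  also have "\<dots> = (\<Sum>i=1..m. (if k = i then of_int (a i) else 0))"
    using S_inv[OF nf emb ib] k by (intro sum.cong) auto
  also have "\<dots> = of_int (a k)" using k by simp
  finally show ?thesis by simp
qed

lemma size_M_ge: "j \<in> {1..m} \<Longrightarrow> cmod (\<sigma> j z) \<le> size_M m \<sigma> z"
  unfolding size_M_def by (intro Max_ge) auto

lemma size_M_nonneg: "m \<ge> 1 \<Longrightarrow> size_M m \<sigma> z \<ge> 0"
  using size_M_ge[of 1 m \<sigma> z] by (meson atLeastAtMost_iff le_refl norm_ge_zero order_trans)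

lemma coord_bound:
  assumes nf: "number_field M m" and emb: "all_embeddings M m \<sigma>" and ib: "integral_basis M m \<omega>"
    and z: "z = (\<Sum>i=1..m. of_int (a i) * \<omega> i)" and k: "k \<in> {1..m}"
  shows "\<bar>real_of_int (a k)\<bar> \<le> row_norm m (mat_inv_1 m (\<lambda>j i. \<sigma> j (\<omega> i))) * size_M m \<sigma> z"
proof -
  let ?T = "mat_inv_1 m (\<lambda>j i. \<sigma> j (\<omega> i))"
  have m: "m \<ge> 1" using k by auto
  have "\<bar>real_of_int (a k)\<bar> = cmod (of_int (a k) :: complex)" by simp
  also have "\<dots> = cmod (\<Sum>j=1..m. ?T k j * \<sigma> j z)" using coord[OF nf emb ib z k] by simp
  also have "\<dots> \<le> (\<Sum>j=1..m. cmod (?T k j) * cmod (\<sigma> j z))"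
    by (rule order_trans[OF norm_sum]) (simp add: norm_mult)
  also have "\<dots> \<le> (\<Sum>j=1..m. cmod (?T k j) * size_M m \<sigma> z)"
    by (intro sum_mono mult_left_mono size_M_ge) auto
  also have "\<dots> = (\<Sum>j=1..m. cmod (?T k j)) * size_M m \<sigma> z" by (simp add: sum_distrib_right)
  also have "\<dots> \<le> row_norm m ?T * size_M m \<sigma> z"
    unfolding row_norm_def using k size_M_nonneg[OF m]
    by (intro mult_right_mono Max_ge) auto
  finally show ?thesis .
qed



lemma poly_div_M:
  assumes sf: "subfield_C M" and p: "\<forall>i. coeff p i \<in> M" and h: "\<forall>i. coeff h i \<in> M" and h0: "h \<noteq> 0"
  shows "\<exists>q r. (\<forall>i. coeff q i \<in> M) \<and> (\<forall>i. coeff r i \<in> M) \<and> p = q * h + r \<and> (r = 0 \<or> degree r < degree h)"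
  using p
proof (induction "degree p" arbitrary: p rule: less_induct)
  case less
  show ?case
  proof (cases "p = 0 \<or> degree p < degree h")
    case True
    then show ?thesis using less.prems sf_0[OF sf]
      by (intro exI[of _ 0] exI[of _ p]) auto
  next
    case False
    hence pn: "p \<noteq> 0" and dg: "degree h \<le> degree p" by auto
    define d where "d = degree p - degree h"
    define c where "c = lead_coeff p / lead_coeff h"
    define p' where "p' = p - monom c d * h"
    have cM: "c \<in> M" unfolding c_def using less.prems h sf_divide[OF sf] by auto
    have mhM: "\<forall>i. coeff (monom c d * h) i \<in> M"
      using cM h sf_0[OF sf] sf_mult[OF sf] by (auto simp: coeff_monom_mult)
    have p'M: "\<forall>i. coeff p' i \<in> M" unfolding p'_def using less.prems mhM sf_diff[OF sf] by auto
    have lh: "lead_coeff h \<noteq> 0" using h0 by simp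
    have cp: "coeff p' (degree p) = 0"
      unfolding p'_def using dg lh by (simp add: coeff_monom_mult d_def c_def)
    have "degree (monom c d * h) \<le> degree p"
      by (rule order_trans[OF degree_mult_le]) (use dg degree_monom_le[of c d] in \<open>auto simp: d_def\<close>)
    hence dp': "degree p' \<le> degree p" unfolding p'_def by (meson degree_diff_le le_refl)
    show ?thesis
    proof (cases "p' = 0")
      case True
      hence "p = monom c d * h + 0" unfolding p'_def by simp
      thus ?thesis using mhM cM sf_0[OF sf]
        by (intro exI[of _ "monom c d"] exI[of _ 0]) (auto simp: coeff_monom)
    next
      case False
      have "degree p' \<noteq> degree p" using False cp by (metis leading_coeff_0_iff)
      hence "degree p' < degree p" using dp' by simp
      from less.hyps[OF this p'M] obtain q r where qr: "\<forall>i. coeff q i \<in> M" "\<forall>i. coeff r i \<in> M"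
        "p' = q * h + r" "r = 0 \<or> degree r < degree h" by blast
      have "p = (q + monom c d) * h + r" using qr(3) unfolding p'_def by (simp add: algebra_simps)
      moreover have "\<forall>i. coeff (q + monom c d) i \<in> M"
        using qr(1) cM sf_add[OF sf] sf_0[OF sf] by (auto simp: coeff_monom)
      ultimately show ?thesis using qr by blast
    qed
  qed
qed

lemma irr_sep:
  assumes sf: "subfield_C M" and irr: "irreducible_over M f"
  shows "rsquarefree f"
proof -
  have fM: "\<forall>i. coeff f i \<in> M" and df: "degree f \<ge> 1" using irr unfolding irreducible_over_def by auto
  have f0: "f \<noteq> 0" using df by auto
  have f'M: "\<forall>i. coeff (pderiv f) i \<in> M"
  proof
    fix i show "coeff (pderiv f) i \<in> M" unfolding coeff_pderiv
      by (rule sf_mult[OF sf sf_of_nat[OF sf]]) (use fM in blast)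
  qed
  have f'0: "pderiv f \<noteq> 0" using df by (simp add: pderiv_eq_0_iff)
  show ?thesis unfolding rsquarefree_roots
  proof (intro allI notI)
    fix a assume a: "poly f a = 0 \<and> poly (pderiv f) a = 0"
    define P where "P g \<longleftrightarrow> g \<noteq> 0 \<and> (\<forall>i. coeff g i \<in> M) \<and> poly g a = 0" for g
    have "P f" using a f0 fM unfolding P_def by auto
    define n where "n = (LEAST n. \<exists>g. P g \<and> degree g = n)"
    have "\<exists>g. P g \<and> degree g = n" unfolding n_def by (rule LeastI_ex) (use \<open>P f\<close> in blast)
    then obtain g where g: "P g" "degree g = n" by blast
    have minimal: "degree g \<le> degree k" if "P k" for k
      using that g(2) unfolding n_def by (metis (mono_tags, lifting) Least_le)
    have gM: "\<forall>i. coeff g i \<in> M" and g0: "g \<noteq> 0" and ga: "poly g a = 0" using g(1) unfolding P_def by auto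
    have divs: "\<exists>q. (\<forall>i. coeff q i \<in> M) \<and> k = q * g" if k: "\<forall>i. coeff k i \<in> M" "poly k a = 0" for k
    proof -
      obtain q r where qr: "\<forall>i. coeff q i \<in> M" "\<forall>i. coeff r i \<in> M" "k = q * g + r" "r = 0 \<or> degree r < degree g"
        using poly_div_M[OF sf k(1) gM g0] by blast
      have "poly r a = 0" using qr(3) k(2) ga by (metis add_0 mult_zero_right poly_add poly_mult)
      hence "r = 0" using qr minimal[of r] unfolding P_def by force
      thus ?thesis using qr by auto
    qed
    obtain q where q: "\<forall>i. coeff q i \<in> M" "f = q * g" using divs[OF fM] a by blast
    obtain q' where q': "f' = q' * g" if "f' = pderiv f" for f'
      using divs[OF f'M] a by blast
    have "degree g \<noteq> 0"
    proof
      assume "degree g = 0"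
      then obtain c where "g = [:c:]" by (metis degree_eq_zeroE)
      thus False using g0 ga by simp
    qed
    hence "degree q = 0" using irr q unfolding irreducible_over_def by (metis gM mult.commute)
    hence "degree g = degree f" using q f0 by (metis add_0 degree_mult_eq mult_zero_left mult_zero_right)
    moreover have "degree g \<le> degree (pderiv f)"
      using q'[OF refl] f'0 by (metis dvd_imp_degree dvd_triv_right g0)
    ultimately show False using df by (simp add: degree_pderiv)
  qed
qed



lemma norm_hom:
  assumes sf: "subfield_C M" and fM: "\<forall>i. coeff f i \<in> M" and monic: "lead_coeff f = 1"
    and sq: "rsquarefree f" and X: "X \<in> M" and Y: "Y \<in> M" and Y0: "Y \<noteq> 0"
  shows "rel_norm_lin f X Y = (\<Sum>i\<le>degree f. coeff f i * X ^ i * Y ^ (degree f - i))"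
proof -
  define R where "R = {z. poly f z = 0}"
  have f0: "f \<noteq> 0" using monic by auto
  have finR: "finite R" unfolding R_def using f0 by (rule poly_roots_finite)
  have fdec: "f = (\<Prod>z\<in>R. [:-z, 1:])"
    using complex_poly_decompose_rsquarefree[OF sq] monic unfolding R_def by simp
  have "degree f = (\<Sum>z\<in>R. degree [:-z, 1:])"
    by (subst fdec, rule degree_prod_sum_eq) auto
  hence cR: "card R = degree f" by simp
  have "rel_norm_lin f X Y = (\<Prod>r\<in>R. Y * (X / Y - r))"
    unfolding rel_norm_lin_def R_def[symmetric] using Y0 by (intro prod.cong) (auto simp: field_simps)
  also have "\<dots> = Y ^ degree f * (\<Prod>r\<in>R. (X / Y - r))"
    by (simp add: prod.distrib cR)
  also have "(\<Prod>r\<in>R. (X / Y - r)) = poly f (X / Y)"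
    by (subst fdec) (simp add: poly_prod)
  also have "Y ^ degree f * poly f (X / Y) = (\<Sum>i\<le>degree f. coeff f i * X ^ i * Y ^ (degree f - i))"
    unfolding poly_altdef sum_distrib_left
  proof (intro sum.cong refl)
    fix i assume "i \<in> {..degree f}"
    hence "Y ^ degree f = Y ^ i * Y ^ (degree f - i)" by (simp add: power_add[symmetric])
    thus "Y ^ degree f * (coeff f i * (X / Y) ^ i) = coeff f i * X ^ i * Y ^ (degree f - i)"
      using Y0 by (simp add: power_divide field_simps)
  qed
  finally show ?thesis .
qed

lemma conj_bound:
  assumes sf: "subfield_C M" and fe: "field_embedding M \<sigma>"
    and fM: "\<forall>i. coeff f i \<in> M" and monic: "lead_coeff f = 1"
    and sq: "rsquarefree f" and X: "X \<in> M" and Y: "Y \<in> M" and Y0: "Y \<noteq> 0"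
    and n: "degree f = n" "n \<ge> 1"
  shows "\<exists>z. poly (map_poly \<sigma> f) z = 0 \<and> cmod (\<sigma> X - z * \<sigma> Y) \<le> root n (cmod (\<sigma> (rel_norm_lin f X Y)))"
proof -
  define g where "g = map_poly \<sigma> f"
  have cg: "coeff g i = \<sigma> (coeff f i)" for i unfolding g_def by (simp add: coeff_map_poly fe_0[OF sf fe])
  have "degree g \<le> n"
    by (rule degree_le) (auto simp: cg n(1)[symmetric] coeff_eq_0 fe_0[OF sf fe])
  moreover have "coeff g n = 1" using cg monic n fe_1[OF sf fe] by simp
  ultimately have dg: "degree g = n" by (metis le_antisym le_degree one_neq_zero)
  have lg: "lead_coeff g = 1" using dg \<open>coeff g n = 1\<close> by simp
  have sY: "\<sigma> Y \<noteq> 0" using fe_nz[OF sf fe Y Y0] .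
  have "\<sigma> (rel_norm_lin f X Y) = \<sigma> (\<Sum>i\<le>n. coeff f i * X ^ i * Y ^ (n - i))"
    using norm_hom[OF sf fM monic sq X Y Y0] n by simp
  also have "\<dots> = (\<Sum>i\<le>n. \<sigma> (coeff f i * X ^ i * Y ^ (n - i)))"
    using fM X Y sf_mult[OF sf] sf_power[OF sf] by (intro fe_sum[OF sf fe]) auto
  also have "\<dots> = (\<Sum>i\<le>n. coeff g i * \<sigma> X ^ i * \<sigma> Y ^ (n - i))"
    using fM X Y sf_mult[OF sf] sf_power[OF sf] fe_mult[OF sf fe] fe_power[OF sf fe]
    by (intro sum.cong) (auto simp: cg)
  also have "\<dots> = \<sigma> Y ^ n * poly g (\<sigma> X / \<sigma> Y)"
    unfolding poly_altdef dg sum_distrib_left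
  proof (intro sum.cong refl)
    fix i assume "i \<in> {..n}"
    hence "\<sigma> Y ^ n = \<sigma> Y ^ i * \<sigma> Y ^ (n - i)" by (simp add: power_add[symmetric])
    thus "coeff g i * \<sigma> X ^ i * \<sigma> Y ^ (n - i) = \<sigma> Y ^ n * (coeff g i * (\<sigma> X / \<sigma> Y) ^ i)"
      using sY by (simp add: power_divide field_simps)
  qed
  finally have e1: "\<sigma> (rel_norm_lin f X Y) = \<sigma> Y ^ n * poly g (\<sigma> X / \<sigma> Y)" .
  obtain rt where rt: "Polynomial.smult (lead_coeff g) (\<Prod>i<degree g. [:-rt i, 1:]) = g"
    using complex_poly_decompose' by blast
  hence gdec: "g = (\<Prod>i<n. [:-rt i, 1:])" using lg dg by simp
  have roots: "poly g (rt i) = 0" if "i < n" for i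
  proof -
    have "poly g (rt i) = (\<Prod>k<n. rt i - rt k)" by (subst gdec) (simp add: poly_prod)
    also have "\<dots> = 0" using that by (intro prod_zero) auto
    finally show ?thesis .
  qed
  have "\<sigma> Y ^ n * poly g (\<sigma> X / \<sigma> Y) = (\<Prod>i<n. \<sigma> Y * (\<sigma> X / \<sigma> Y - rt i))"
    by (subst gdec) (simp add: poly_prod prod.distrib)
  also have "\<dots> = (\<Prod>i<n. \<sigma> X - rt i * \<sigma> Y)"
    using sY by (intro prod.cong) (auto simp: field_simps)
  finally have e2: "\<sigma> (rel_norm_lin f X Y) = (\<Prod>i<n. \<sigma> X - rt i * \<sigma> Y)" using e1 by simp
  define t where "t = root n (cmod (\<sigma> (rel_norm_lin f X Y)))"
  have t0: "t \<ge> 0" unfolding t_def by (intro real_root_ge_zero) simp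
  show ?thesis
  proof (rule ccontr)
    assume "\<not> ?thesis"
    hence big: "cmod (\<sigma> X - rt i * \<sigma> Y) > t" if "i < n" for i
      using roots that unfolding g_def t_def by (meson not_le)
    define G where "G i = cmod (\<sigma> X - rt i * \<sigma> Y)" for i
    have bigG: "\<And>i. i \<in> {..<n} \<Longrightarrow> t < G i" using big unfolding G_def by auto
    have "(\<Prod>i<n. t) < (\<Prod>i<n. G i)"
    proof (rule prod_mono_strict[of 0])
      show "0 \<in> {..<n}" using n(2) by simp
      show "t < G 0" using bigG n(2) by simp
      show "finite {..<n}" by simp
      show "\<And>i. i \<in> {..<n} \<Longrightarrow> 0 \<le> t \<and> t \<le> G i" using bigG t0 less_imp_le by blast
      show "\<And>i. i \<in> {..<n} \<Longrightarrow> 0 < G i" using bigG t0 by (meson le_less_trans)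
    qed
    also have "\<dots> = (\<Prod>i<n. cmod (\<sigma> X - rt i * \<sigma> Y))" unfolding G_def ..
    also have "\<dots> = cmod (\<sigma> (rel_norm_lin f X Y))" using e2 by (simp add: prod_norm)
    also have "\<dots> = t ^ n" unfolding t_def using n(2) by simp
    finally show False by simp
  qed
qed

lemma const_bound:
  assumes sf: "subfield_C M" and fe: "field_embedding M \<sigma>"
    and monic: "lead_coeff f = 1" and n: "degree f = n"
    and h: "\<forall>z. poly (map_poly \<sigma> f) z = 0 \<longrightarrow> cmod z \<le> H"
  shows "cmod (\<sigma> (coeff f 0)) \<le> H ^ n"
proof -
  define g where "g = map_poly \<sigma> f"
  have cg: "coeff g i = \<sigma> (coeff f i)" for i unfolding g_def by (simp add: coeff_map_poly fe_0[OF sf fe])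
  have "degree g \<le> n"
    by (rule degree_le) (auto simp: cg n(1)[symmetric] coeff_eq_0 fe_0[OF sf fe])
  moreover have "coeff g n = 1" using cg monic n fe_1[OF sf fe] by simp
  ultimately have dg: "degree g = n" by (metis le_antisym le_degree one_neq_zero)
  have lg: "lead_coeff g = 1" using dg \<open>coeff g n = 1\<close> by simp
  obtain rt where rt: "Polynomial.smult (lead_coeff g) (\<Prod>i<degree g. [:-rt i, 1:]) = g"
    using complex_poly_decompose' by blast
  hence gdec: "g = (\<Prod>i<n. [:-rt i, 1:])" using lg dg by simp
  have roots: "poly g (rt i) = 0" if "i < n" for i
  proof -
    have "poly g (rt i) = (\<Prod>k<n. rt i - rt k)" by (subst gdec) (simp add: poly_prod)
    also have "\<dots> = 0" using that by (intro prod_zero) auto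
    finally show ?thesis .
  qed
  have "\<sigma> (coeff f 0) = poly g 0" using cg by (simp add: poly_0_coeff_0)
  also have "\<dots> = (\<Prod>i<n. - rt i)" by (subst gdec) (simp add: poly_prod)
  finally have "cmod (\<sigma> (coeff f 0)) = cmod (\<Prod>i<n. - rt i)" by simp
  also have "\<dots> = (\<Prod>i<n. cmod (- rt i))" by (rule prod_norm[symmetric])
  also have "\<dots> = (\<Prod>i<n. cmod (rt i))" by simp
  also have "\<dots> \<le> (\<Prod>i<n. H)"
    using roots h unfolding g_def by (intro prod_mono) auto
  finally show ?thesis by simp
qed



lemma alg_int_powers:
  assumes "alg_int \<beta>"
  obtains d :: nat and ci :: "nat \<Rightarrow> int" where "d \<ge> 1"
    "\<And>k. \<exists>a :: nat \<Rightarrow> int. \<beta> ^ k = (\<Sum>l<d. of_int (a l) * \<beta> ^ l)"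
proof -
  obtain p :: "complex poly" where p: "lead_coeff p = 1" "\<forall>i. coeff p i \<in> \<int>" "poly p \<beta> = 0"
    using assms unfolding alg_int_def by blast
  define d where "d = degree p"
  have d1: "d \<ge> 1"
  proof (rule ccontr)
    assume "\<not> d \<ge> 1"
    hence "degree p = 0" unfolding d_def by simp
    hence "p = [:1:]" using p(1) by (metis degree_eq_zeroE lead_coeff_pCons(2) pCons_0_0 zero_neq_one)
    thus False using p(3) by simp
  qed
  then obtain d' where d': "d = Suc d'" by (cases d) auto
  define ci where "ci l = (SOME z::int. coeff p l = of_int z)" for l
  have ci: "coeff p l = of_int (ci l)" for l
    using p(2) unfolding ci_def by (metis (mono_tags) Ints_cases someI_ex)
  have "0 = (\<Sum>l\<le>d. coeff p l * \<beta> ^ l)" using p(3) unfolding poly_altdef d_def by simp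
  also have "\<dots> = (\<Sum>l<d. coeff p l * \<beta> ^ l) + \<beta> ^ d"
    using p(1) unfolding d_def by (simp add: lessThan_Suc_atMost[symmetric])
  finally have bd: "\<beta> ^ d = - (\<Sum>l<d. of_int (ci l) * \<beta> ^ l)" using ci
    by (simp add: eq_neg_iff_add_eq_0 add.commute)
  have step: "\<exists>a'. \<beta> * (\<Sum>l<d. of_int (a l) * \<beta> ^ l) = (\<Sum>l<d. of_int (a' l) * \<beta> ^ l)" for a :: "nat \<Rightarrow> int"
  proof -
    define a' where "a' l = (case l of 0 \<Rightarrow> 0 | Suc l' \<Rightarrow> a l') - a d' * ci l" for l
    have "(\<Sum>l<d. of_int (a' l) * \<beta> ^ l) =
        (\<Sum>l<d. of_int (case l of 0 \<Rightarrow> 0 | Suc l' \<Rightarrow> a l') * \<beta> ^ l) - of_int (a d') * (\<Sum>l<d. of_int (ci l) * \<beta> ^ l)"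
      unfolding a'_def by (simp add: sum_distrib_left sum_subtractf[symmetric] algebra_simps)
    also have "(\<Sum>l<d. of_int (case l of 0 \<Rightarrow> 0 | Suc l' \<Rightarrow> a l') * \<beta> ^ l) = (\<Sum>l<d'. of_int (a l) * \<beta> ^ Suc l)"
      unfolding d' by (subst sum.lessThan_Suc_shift) simp
    also have "- (\<Sum>l<d. of_int (ci l) * \<beta> ^ l) = \<beta> ^ d" using bd by simp
    hence "of_int (a d') * (\<Sum>l<d. of_int (ci l) * \<beta> ^ l) = - (of_int (a d') * \<beta> ^ d)"
      by (metis minus_mult_right minus_minus)
    finally have "(\<Sum>l<d. of_int (a' l) * \<beta> ^ l) = (\<Sum>l<d'. of_int (a l) * \<beta> ^ Suc l) + of_int (a d') * \<beta> ^ Suc d'"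
      using d' by simp
    also have "\<dots> = \<beta> * (\<Sum>l<d. of_int (a l) * \<beta> ^ l)"
      unfolding d' by (simp add: sum_distrib_left algebra_simps)
    finally show ?thesis by metis
  qed
  have "\<exists>a :: nat \<Rightarrow> int. \<beta> ^ k = (\<Sum>l<d. of_int (a l) * \<beta> ^ l)" for k
  proof (induction k)
    case 0
    have "\<beta> ^ 0 = (\<Sum>l<d. of_int (if l = 0 then 1 else 0) * \<beta> ^ l)"
      unfolding d' by (subst sum.lessThan_Suc_shift) simp
    thus ?case by (rule exI[of _ "\<lambda>l. if l = 0 then 1 else 0"])
  next
    case (Suc k)
    then obtain a where "\<beta> ^ k = (\<Sum>l<d. of_int (a l) * \<beta> ^ l)" by blast
    hence "\<beta> ^ Suc k = \<beta> * (\<Sum>l<d. of_int (a l) * \<beta> ^ l)" by simp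
    thus ?case using step[of a] by metis
  qed
  thus ?thesis using that d1 by blast
qed


lemma house_ge1:
  assumes nf: "number_field M m" and emb: "all_embeddings M m \<sigma>" and ib: "integral_basis M m \<omega>"
    and bO: "\<beta> \<in> ring_of_integers M" and b0: "\<beta> \<noteq> 0" and m1: "m \<ge> 1"
  shows "\<exists>j\<in>{1..m}. cmod (\<sigma> j \<beta>) \<ge> 1"
proof (rule ccontr)
  assume "\<not> ?thesis"
  hence lt: "\<forall>j\<in>{1..m}. cmod (\<sigma> j \<beta>) < 1" by auto
  have sf: "subfield_C M" using nf by (rule nf_sf)
  have bM: "\<beta> \<in> M" and ai: "alg_int \<beta>" using bO unfolding ring_of_integers_def by auto
  obtain d where d1: "d \<ge> 1" and pw: "\<And>k. \<exists>a :: nat \<Rightarrow> int. \<beta> ^ k = (\<Sum>l<d. of_int (a l) * \<beta> ^ l)"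
    using alg_int_powers[OF ai] by metis
  have "\<forall>l<d. \<exists>r::nat\<Rightarrow>rat. \<beta> ^ l = (\<Sum>i=1..m. of_rat (r i) * \<omega> i)"
    using omega_Q_span[OF nf ib] sf_power[OF sf bM] by blast
  then obtain r where r: "\<forall>l<d. \<beta> ^ l = (\<Sum>i=1..m. of_rat (r l i) * \<omega> i)" by metis
  obtain D :: int where D: "D > 0" "\<forall>li\<in>{..<d} \<times> {1..m}. \<exists>z::int. of_int D * (\<lambda>(l,i). r l i) li = of_int z"
    using common_denom[of "{..<d} \<times> {1..m}" "\<lambda>(l,i). r l i"] by auto
  define zz where "zz l i = (SOME z::int. of_int D * r l i = of_int z)" for l i
  have zz: "of_int D * r l i = of_int (zz l i)" if "l < d" "i \<in> {1..m}" for l i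
    using D(2) that unfolding zz_def by (metis (mono_tags, lifting) SigmaI case_prod_conv lessThan_iff someI_ex)
  have Dpow: "\<exists>q::nat\<Rightarrow>int. of_int D * \<beta> ^ k = (\<Sum>i=1..m. of_int (q i) * \<omega> i)" for k
  proof -
    obtain a :: "nat \<Rightarrow> int" where a: "\<beta> ^ k = (\<Sum>l<d. of_int (a l) * \<beta> ^ l)" using pw by blast
    have "of_int D * \<beta> ^ k = (\<Sum>l<d. of_int (a l) * (of_int D * \<beta> ^ l))"
      unfolding a by (simp add: sum_distrib_left algebra_simps)
    also have "\<dots> = (\<Sum>l<d. of_int (a l) * (\<Sum>i=1..m. of_int (zz l i) * \<omega> i))"
    proof (intro sum.cong refl)
      fix l assume l: "l \<in> {..<d}"
      have "of_int D * \<beta> ^ l = (\<Sum>i=1..m. of_int D * of_rat (r l i) * \<omega> i)"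
        using r l by (simp add: sum_distrib_left mult.assoc)
      also have "\<dots> = (\<Sum>i=1..m. of_int (zz l i) * \<omega> i)"
      proof (intro sum.cong refl)
        fix i assume i: "i \<in> {1..m}"
        have "(of_int D * of_rat (r l i) :: complex) = of_rat (of_int D * r l i)" by (simp add: of_rat_mult)
        also have "\<dots> = of_int (zz l i)" using zz[of l i] l i by simp
        finally show "of_int D * of_rat (r l i) * \<omega> i = of_int (zz l i) * \<omega> i" by simp
      qed
      finally show "of_int (a l) * (of_int D * \<beta> ^ l) = of_int (a l) * (\<Sum>i=1..m. of_int (zz l i) * \<omega> i)" by simp
    qed
    also have "\<dots> = (\<Sum>i=1..m. of_int (\<Sum>l<d. a l * zz l i) * \<omega> i)"
      by (simp add: sum_distrib_left sum_distrib_right mult.assoc) (rule sum.swap)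
    finally show ?thesis by (rule exI[of _ "\<lambda>i. \<Sum>l<d. a l * zz l i"])
  qed
  define h where "h = size_M m \<sigma> \<beta>"
  have fin: "finite ((\<lambda>j. cmod (\<sigma> j \<beta>)) ` {1..m})" by simp
  have ne: "(\<lambda>j. cmod (\<sigma> j \<beta>)) ` {1..m} \<noteq> {}" using m1 by auto
  have h1: "h < 1" unfolding h_def size_M_def using lt fin ne by (subst Max_less_iff) auto
  have h0: "h \<ge> 0" unfolding h_def by (rule size_M_nonneg[OF m1])
  define rn where "rn = row_norm m (mat_inv_1 m (\<lambda>j i. \<sigma> j (\<omega> i)))"
  have rn0: "rn \<ge> 0" unfolding rn_def row_norm_def
    by (rule order_trans[OF _ Max_ge[of _ "\<Sum>j=1..m. cmod (mat_inv_1 m (\<lambda>j i. \<sigma> j (\<omega> i)) 1 j)"]])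
      (use m1 in \<open>auto intro: sum_nonneg\<close>)
  have nn: "rn * D \<ge> 0" using rn0 D(1) by simp
  have lt1: "(rn * D) * (1 / (rn * D + 1)) < 1"
  proof -
    have p: "rn * D + 1 > 0" using nn by simp
    have "(rn * D) * (1 / (rn * D + 1)) = (rn * D) / (rn * D + 1)" by simp
    also have "\<dots> < 1" using p by (simp add: divide_less_eq)
    finally show ?thesis .
  qed
  have "1 / (rn * D + 1) > 0" using nn by simp
  then obtain k where k: "h ^ k < 1 / (rn * D + 1)"
    using real_arch_pow_inv[of "1 / (rn * D + 1)" h] h1 by blast
  obtain q :: "nat \<Rightarrow> int" where q: "of_int D * \<beta> ^ k = (\<Sum>i=1..m. of_int (q i) * \<omega> i)" using Dpow by blast
  have szb: "size_M m \<sigma> (of_int D * \<beta> ^ k) \<le> D * h ^ k"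
    unfolding size_M_def
  proof (subst Max_le_iff)
    show "\<forall>a\<in>(\<lambda>j. cmod (\<sigma> j (of_int D * \<beta> ^ k))) ` {1..m}. a \<le> real_of_int D * h ^ k"
    proof
      fix a assume "a \<in> (\<lambda>j. cmod (\<sigma> j (of_int D * \<beta> ^ k))) ` {1..m}"
      then obtain j where j: "j \<in> {1..m}" "a = cmod (\<sigma> j (of_int D * \<beta> ^ k))" by auto
      have fe: "field_embedding M (\<sigma> j)" using emb j(1) by (rule emb_fe)
      have "\<sigma> j (of_int D * \<beta> ^ k) = of_int D * \<sigma> j \<beta> ^ k"
        using fe_mult[OF sf fe sf_of_int[OF sf] sf_power[OF sf bM]] fe_of_int[OF sf fe] fe_power[OF sf fe bM] by simp
      hence "a = D * cmod (\<sigma> j \<beta>) ^ k" using j D(1) by (simp add: norm_mult norm_power)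
      also have "\<dots> \<le> D * h ^ k"
        using D(1) size_M_ge[OF j(1), of \<sigma> \<beta>] unfolding h_def by (intro mult_left_mono power_mono) auto
      finally show "a \<le> real_of_int D * h ^ k" .
    qed
  qed (use m1 in auto)
  have "q i = 0" if i: "i \<in> {1..m}" for i
  proof -
    have "\<bar>real_of_int (q i)\<bar> \<le> rn * size_M m \<sigma> (of_int D * \<beta> ^ k)"
      unfolding rn_def by (rule coord_bound[OF nf emb ib q i])
    also have "\<dots> \<le> rn * (D * h ^ k)" using szb rn0 by (rule mult_left_mono)
    also have "\<dots> = (rn * D) * h ^ k" by simp
    also have "\<dots> \<le> (rn * D) * (1 / (rn * D + 1))" using k rn0 D(1) by (intro mult_left_mono) auto
    also have "\<dots> < 1" by (rule lt1)
    finally show ?thesis by linarith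
  qed
  hence "of_int D * \<beta> ^ k = 0" using q by simp
  thus False using D(1) b0 by simp
qed



theorem theorem1:
  fixes M :: "complex set" and m n :: nat and \<omega> :: "nat \<Rightarrow> complex"
    and \<sigma> :: "nat \<Rightarrow> complex \<Rightarrow> complex" and f :: "complex poly"
    and \<alpha> \<mu> X Y :: complex and x y :: "nat \<Rightarrow> int"
  assumes nf: "number_field M m"
    and emb: "all_embeddings M m \<sigma>"
    and ib: "integral_basis M m \<omega>"
    and alpha_int: "alg_int \<alpha>"
    and alpha_nz: "\<alpha> \<noteq> 0"
    and f_monic: "lead_coeff f = 1"
    and f_coeffs: "\<forall>i. coeff f i \<in> ring_of_integers M"
    and f_irr: "irreducible_over M f"
    and f_root: "poly f \<alpha> = 0"
    and f_deg: "degree f = n"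
    and mu: "\<mu> \<in> ring_of_integers M" "\<mu> \<noteq> 0"
    and XY: "X \<in> ring_of_integers M" "Y \<in> ring_of_integers M"
    and eq: "rel_norm_lin f X Y = \<mu>"
    and big: "size_M m \<sigma> Y > root n (size_M m \<sigma> \<mu>) / size_alpha m \<sigma> f"
    and Xrep: "X = (\<Sum>i=1..m. of_int (x i) * \<omega> i)"
    and Yrep: "Y = (\<Sum>i=1..m. of_int (y i) * \<omega> i)"
  shows "real_of_int (max (Max ((\<lambda>i. \<bar>x i\<bar>) ` {1..m})) (Max ((\<lambda>i. \<bar>y i\<bar>) ` {1..m})))
           \<le> (2 * row_norm m (mat_inv_1 m (\<lambda>j i. \<sigma> j (\<omega> i))) * size_alpha m \<sigma> f) * size_M m \<sigma> Y"
proof -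
  have sf: "subfield_C M" using nf by (rule nf_sf)
  have m1: "m \<ge> 1"
  proof (rule ccontr)
    assume "\<not> m \<ge> 1"
    hence "m = 0" by simp
    moreover obtain q :: "nat \<Rightarrow> rat" where "(1::complex) = (\<Sum>i=1..m. of_rat (q i) * \<omega> i)"
      using omega_Q_span[OF nf ib] sf_1[OF sf] by blast
    ultimately show False by simp
  qed
  have n1: "n \<ge> 1" using f_irr f_deg unfolding irreducible_over_def by auto
  have fM: "\<forall>i. coeff f i \<in> M" using f_coeffs unfolding ring_of_integers_def by auto
  have sq: "rsquarefree f" using irr_sep[OF sf f_irr] .
  have XM: "X \<in> M" and YM: "Y \<in> M" and muM: "\<mu> \<in> M" using XY mu unfolding ring_of_integers_def by auto
  define ha where "ha = size_alpha m \<sigma> f"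
  define hY where "hY = size_M m \<sigma> Y"
  define hX where "hX = size_M m \<sigma> X"
  define hm where "hm = size_M m \<sigma> \<mu>"
  define rn where "rn = row_norm m (mat_inv_1 m (\<lambda>j i. \<sigma> j (\<omega> i)))"
  have fej: "field_embedding M (\<sigma> j)" if "j \<in> {1..m}" for j using emb that by (rule emb_fe)
  have degj: "degree (map_poly (\<sigma> j) f) = n" if j: "j \<in> {1..m}" for j
  proof -
    have cg: "coeff (map_poly (\<sigma> j) f) i = \<sigma> j (coeff f i)" for i
      by (simp add: coeff_map_poly fe_0[OF sf fej[OF j]])
    have "degree (map_poly (\<sigma> j) f) \<le> n"
      by (rule degree_le) (auto simp: cg f_deg[symmetric] coeff_eq_0 fe_0[OF sf fej[OF j]])
    moreover have "coeff (map_poly (\<sigma> j) f) n = 1" using cg f_monic f_deg fe_1[OF sf fej[OF j]] by simp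
    ultimately show ?thesis by (metis le_antisym le_degree one_neq_zero)
  qed
  define RS where "RS = {cmod r | r j. j \<in> {1..m} \<and> poly (map_poly (\<sigma> j) f) r = 0}"
  have RSsub: "RS \<subseteq> cmod ` (\<Union>j\<in>{1..m}. {r. poly (map_poly (\<sigma> j) f) r = 0})" unfolding RS_def by blast
  have finRS: "finite RS"
  proof (rule finite_subset[OF RSsub], intro finite_imageI finite_UN_I)
    fix j assume j: "j \<in> {1..m}"
    have "map_poly (\<sigma> j) f \<noteq> 0" using degj[OF j] n1 by auto
    thus "finite {r. poly (map_poly (\<sigma> j) f) r = 0}" by (rule poly_roots_finite)
  qed simp
  have ha_ge: "cmod r \<le> ha" if "j \<in> {1..m}" "poly (map_poly (\<sigma> j) f) r = 0" for j r
    unfolding ha_def size_alpha_def RS_def[symmetric] using that finRS by (intro Max_ge) (auto simp: RS_def)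
  have ha0: "ha \<ge> 0"
  proof -
    have "\<not> constant (poly (map_poly (\<sigma> 1) f))" using degj[of 1] m1 n1 by (simp add: constant_degree)
    then obtain z where "poly (map_poly (\<sigma> 1) f) z = 0" using fundamental_theorem_of_algebra by blast
    hence "cmod z \<le> ha" using ha_ge[of 1 z] m1 by auto
    thus ?thesis by (meson norm_ge_zero order_trans)
  qed
  have f00: "coeff f 0 \<noteq> 0"
  proof
    assume c0: "coeff f 0 = 0"
    obtain a g where fg: "f = pCons a g" by (cases f) auto
    have a0: "a = 0" using c0 fg by simp
    have gM: "\<forall>i. coeff g i \<in> M" using fM fg by (metis coeff_pCons_Suc)
    have fxg: "f = [:0, 1:] * g" using fg a0 by simp
    have xM: "\<forall>i. coeff [:0, 1:] i \<in> M" using sf_0[OF sf] sf_1[OF sf] by (auto simp: coeff_pCons split: nat.split)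
    have "degree g = 0" using f_irr xM gM fxg unfolding irreducible_over_def by fastforce
    then obtain c where "g = [:c:]" by (metis degree_eq_zeroE)
    hence "f = [:0, c:]" using fxg by simp
    hence "f = [:0, 1:]" using f_monic by (cases "c = 0") auto
    thus False using f_root alpha_nz by simp
  qed
  have ha1: "ha \<ge> 1"
  proof (rule ccontr)
    assume "\<not> ha \<ge> 1"
    hence hl: "ha < 1" by simp
    have f0O: "coeff f 0 \<in> ring_of_integers M" using f_coeffs by blast
    obtain j where j: "j \<in> {1..m}" "cmod (\<sigma> j (coeff f 0)) \<ge> 1"
      using house_ge1[OF nf emb ib f0O f00 m1] by blast
    have "cmod (\<sigma> j (coeff f 0)) \<le> ha ^ n"
      using const_bound[OF sf fej[OF j(1)] f_monic f_deg] ha_ge j(1) by blast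
    also have "\<dots> \<le> ha ^ 1" using ha0 hl n1 by (intro power_decreasing) auto
    finally show False using j hl by simp
  qed
  have Y0: "Y \<noteq> 0"
  proof
    assume "Y = 0"
    hence "hY = 0" unfolding hY_def size_M_def using fe_0[OF sf fej] m1
      by (subst Max_eq_iff) auto
    moreover have "root n hm / ha \<ge> 0" unfolding hm_def using size_M_nonneg[OF m1] ha0
      by (intro divide_nonneg_nonneg real_root_ge_zero) auto
    ultimately show False using big unfolding hY_def hm_def ha_def by simp
  qed
  have hY0: "hY \<ge> 0" unfolding hY_def by (rule size_M_nonneg[OF m1])
  have key: "root n hm < ha * hY" using big ha1 unfolding hY_def hm_def ha_def[symmetric]
    by (simp add: divide_less_eq mult.commute)
  have Xj: "cmod (\<sigma> j X) \<le> 2 * ha * hY" if j: "j \<in> {1..m}" for j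
  proof -
    obtain z where z: "poly (map_poly (\<sigma> j) f) z = 0"
      "cmod (\<sigma> j X - z * \<sigma> j Y) \<le> root n (cmod (\<sigma> j (rel_norm_lin f X Y)))"
      using conj_bound[OF sf fej[OF j] fM f_monic sq XM YM Y0 f_deg n1] by blast
    have "root n (cmod (\<sigma> j (rel_norm_lin f X Y))) \<le> root n hm"
      unfolding eq hm_def using n1 size_M_ge[OF j] by (subst real_root_le_iff) auto
    hence d: "cmod (\<sigma> j X - z * \<sigma> j Y) \<le> ha * hY" using z(2) key by linarith
    have "cmod (z * \<sigma> j Y) \<le> ha * hY"
      unfolding norm_mult hY_def using ha_ge[OF j z(1)] size_M_ge[OF j, of \<sigma> Y] ha0
      by (intro mult_mono) auto
    moreover have "cmod (\<sigma> j X) \<le> cmod (\<sigma> j X - z * \<sigma> j Y) + cmod (z * \<sigma> j Y)"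
      by (rule order_trans[OF _ norm_triangle_ineq]) simp
    ultimately show ?thesis using d by simp
  qed
  have hX: "hX \<le> 2 * ha * hY" unfolding hX_def size_M_def using Xj m1
    by (subst Max_le_iff) auto
  have rn0: "rn \<ge> 0" unfolding rn_def row_norm_def
    by (rule order_trans[OF _ Max_ge[of _ "\<Sum>j=1..m. cmod (mat_inv_1 m (\<lambda>j i. \<sigma> j (\<omega> i)) 1 j)"]])
      (use m1 in \<open>auto intro: sum_nonneg\<close>)
  have xb: "\<bar>real_of_int (x i)\<bar> \<le> 2 * rn * ha * hY" if i: "i \<in> {1..m}" for i
  proof -
    have "\<bar>real_of_int (x i)\<bar> \<le> rn * hX" unfolding rn_def hX_def by (rule coord_bound[OF nf emb ib Xrep i])
    also have "\<dots> \<le> rn * (2 * ha * hY)" using hX rn0 by (rule mult_left_mono)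
    finally show ?thesis by simp
  qed
  have yb: "\<bar>real_of_int (y i)\<bar> \<le> 2 * rn * ha * hY" if i: "i \<in> {1..m}" for i
  proof -
    have "\<bar>real_of_int (y i)\<bar> \<le> rn * hY" unfolding rn_def hY_def by (rule coord_bound[OF nf emb ib Yrep i])
    also have "\<dots> \<le> 2 * rn * ha * hY"
    proof -
      have "rn * hY \<ge> 0" using rn0 hY0 by simp
      hence "rn * hY * 1 \<le> rn * hY * (2 * ha)" using ha1 by (intro mult_left_mono) auto
      thus ?thesis by (simp add: algebra_simps)
    qed
    finally show ?thesis .
  qed
  obtain i1 where i1: "i1 \<in> {1..m}" "Max ((\<lambda>i. \<bar>x i\<bar>) ` {1..m}) = \<bar>x i1\<bar>"
    using Max_in[of "(\<lambda>i. \<bar>x i\<bar>) ` {1..m}"] m1 by fastforce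
  obtain i2 where i2: "i2 \<in> {1..m}" "Max ((\<lambda>i. \<bar>y i\<bar>) ` {1..m}) = \<bar>y i2\<bar>"
    using Max_in[of "(\<lambda>i. \<bar>y i\<bar>) ` {1..m}"] m1 by fastforce
  have "real_of_int (max (Max ((\<lambda>i. \<bar>x i\<bar>) ` {1..m})) (Max ((\<lambda>i. \<bar>y i\<bar>) ` {1..m})))
      = max \<bar>real_of_int (x i1)\<bar> \<bar>real_of_int (y i2)\<bar>" using i1 i2 by simp
  also have "\<dots> \<le> 2 * rn * ha * hY" using xb[OF i1(1)] yb[OF i2(1)] by simp
  finally show ?thesis unfolding rn_def ha_def hY_def by simp
qed


end
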